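(* Let "opt" denote either "mV" or "mVc", and suppose the subsampling probabilities are $\pi_i=\pi_i^{opt}=r\frac{h_i^{opt}\wedge M}{\sum_{j=1}^n(h_j^{opt}\wedge M)}$ with $k$ and $M$ defined from $\{h_i^{opt}\}$ as in the context. Index the data points by the increasing order of $h^{opt}$, so that $h^{opt}_{(i)}$ is the $i$-th smallest value and $h^{mV}_{(i)}$ denotes the value of $h^{mV}$ at that same data point. Then the asymptotic MSE of $\tilde\theta$ given $\mathcal{D}_n$, namely $\mathrm{tr}(\tilde\Sigma)$, equals $$\frac{4}{n^2(r-k)}\Big[\sum_{i=1}^{n-k}h^{opt}_{(i)}\Big]\sum_{i=1}^{n-k}\frac{[h^{mV}_{(i)}]^2}{h^{opt}_{(i)}}-\frac{4}{n^2}\sum_{i=1}^{n-k}[h^{mV}_{(i)}]^2.$$ In particular, for opt $=$ mV this minimum value of $\mathrm{tr}(\tilde\Sigma)$ over all admissible probabilities equals $$\frac{4}{n^2(r-k)}\Big[\sum_{i=1}^{n-k}h^{mV}_{(i)}\Big]^2-\frac{4}{n^2}\sum_{i=1}^{n-k}[h^{mV}_{(i)}]^2.$$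
   Context: Physical data $\mathcal{D}_n=\{(x_i,y_i^p)\}_{i=1}^n$; $\hat y^s(x,\theta)$ is a surrogate of a computer model, differentiable in $\theta\in\Theta\subset\mathbb{R}^q$; $\hat\theta=\arg\min_{\theta\in\Theta}\frac1n\sum_i[y_i^p-\hat y^s(x_i,\theta)]^2$; $g_i=\nabla_\theta\hat y^s(x_i,\hat\theta)$; $\tilde J=\frac1n\sum_i\frac{\partial^2[y_i^p-\hat y^s(x_i,\hat\theta)]^2}{\partial\theta\partial\theta^T}$ (assumed invertible). $h_i^{mV}=|y_i^p-\hat y^s(x_i,\hat\theta)|(g_i^T\tilde J^{-2}g_i)^{1/2}$, $h_i^{mVc}=|y_i^p-\hat y^s(x_i,\hat\theta)|(g_i^Tg_i)^{1/2}$. Given $h^{opt}$ (either $h^{mV}$ or $h^{mVc}$) with order statistics $h^{opt}_{(1)}\le\dots\le h^{opt}_{(n)}$, $h^{opt}_{(n+1)}=\infty$, $r\in\{1,\dots,n-1\}$ and $h^{opt}_{(n-r)}>0$: $k=\min\{s:0\le s\le r,(r-s)h^{opt}_{(n-s)}<\sum_{i=1}^{n-s}h^{opt}_{(i)}\}$, $M=\frac{1}{r-k}\sum_{i=1}^{n-k}h^{opt}_{(i)}$. For probabilities $\pi_i\in(0,1]$ with $\sum_i\pi_i=r$: $\tilde V=\frac{4}{n^2}\sum_i\frac{1-\pi_i}{\pi_i}[y_i^p-\hat y^s(x_i,\hat\theta)]^2g_ig_i^T$, $\tilde\Sigma=\tilde J^{-1}\tilde V\tilde J^{-1}$. *)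

theory Defs
  imports "HOL-Analysis.Analysis"
begin

text \<open>Data points are indexed by 0..n-1. Order statistics hs are 1-indexed: hs 1 \<le> ... \<le> hs n.\<close>

definition kidx :: "(nat \<Rightarrow> real) \<Rightarrow> nat \<Rightarrow> nat \<Rightarrow> nat" where
  "kidx hs n r = (LEAST s. s \<le> r \<and> real (r - s) * hs (n - s) < (\<Sum>i=1..n-s. hs i))"

definition Mthr :: "(nat \<Rightarrow> real) \<Rightarrow> nat \<Rightarrow> nat \<Rightarrow> real" where
  "Mthr hs n r = (\<Sum>i=1..n - kidx hs n r. hs i) / real (r - kidx hs n r)"

definition outer :: "real^'q \<Rightarrow> real^'q \<Rightarrow> real^'q^'q" where
  "outer u v = (\<chi> a b. u $ a * v $ b)"

definition loss :: "nat \<Rightarrow> ('x \<Rightarrow> real^'q \<Rightarrow> real) \<Rightarrow> (nat \<Rightarrow> 'x) \<Rightarrow> (nat \<Rightarrow> real)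
    \<Rightarrow> real^'q \<Rightarrow> real" where
  "loss n ys x yp \<theta> = (1 / real n) * (\<Sum>i<n. (yp i - ys (x i) \<theta>)^2)"

definition is_hessian_at :: "(real^'q \<Rightarrow> real) \<Rightarrow> real^'q^'q \<Rightarrow> real^'q \<Rightarrow> bool" where
  "is_hessian_at L J th \<longleftrightarrow> (\<exists>G. (\<forall>\<^sub>F \<theta> in nhds th. (L has_derivative (\<lambda>d. G \<theta> \<bullet> d)) (at \<theta>))
       \<and> (G has_derivative (\<lambda>d. J *v d)) (at th))"

end

theory Submission
  imports Defs
begin


lemma hess_est:
  fixes L :: "real^'q \<Rightarrow> real" and G :: "real^'q \<Rightarrow> real^'q"
  assumes dL: "\<And>y. norm (y - th) < \<delta> \<Longrightarrow> (L has_derivative (\<lambda>d. G y \<bullet> d)) (at y)"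
    and dG: "\<And>y. norm (y - th) < \<delta> \<Longrightarrow> norm (G y - G th - J *v (y - th)) \<le> e * norm (y - th)"
    and e: "e \<ge> 0" and t: "t > 0" "t * (norm u + norm v + 1) < \<delta>"
  shows "\<bar>(L (th + t *\<^sub>R u + t *\<^sub>R v) - L (th + t *\<^sub>R u) - L (th + t *\<^sub>R v) + L th)
           - t^2 * ((J *v v) \<bullet> u)\<bar> \<le> 2 * e * t^2 * (norm u + norm v + 1)^2"
proof -
  define B where "B = norm u + norm v + 1"
  have B1: "B \<ge> 1" unfolding B_def by (simp add: add_nonneg_nonneg)
  define \<phi> where "\<phi> s = L (th + s *\<^sub>R u + t *\<^sub>R v) - L (th + s *\<^sub>R u)" for s
  have nrm: "norm (s *\<^sub>R u + t *\<^sub>R v) \<le> t * B" "norm (s *\<^sub>R u) \<le> t * B" if "0 \<le> s" "s \<le> t" for s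
  proof -
    have "norm (s *\<^sub>R u + t *\<^sub>R v) \<le> norm (s *\<^sub>R u) + norm (t *\<^sub>R v)"
      by (rule norm_triangle_ineq)
    also have "\<dots> = s * norm u + t * norm v" using that by simp
    also have "\<dots> \<le> t * norm u + t * norm v" using that by (simp add: mult_right_mono)
    also have "\<dots> \<le> t * B" using t unfolding B_def by (simp add: distrib_left)
    finally show "norm (s *\<^sub>R u + t *\<^sub>R v) \<le> t * B" .
    have "norm (s *\<^sub>R u) \<le> t * norm u" using that by (simp add: mult_right_mono)
    also have "\<dots> \<le> t * B" using t unfolding B_def by (simp add: mult_left_mono)
    finally show "norm (s *\<^sub>R u) \<le> t * B" .
  qed
  have tB: "t * B < \<delta>" using t unfolding B_def by simp
  have der: "(\<phi> has_derivative (\<lambda>h. G (th + s *\<^sub>R u + t *\<^sub>R v) \<bullet> (h *\<^sub>R u) - G (th + s *\<^sub>R u) \<bullet> (h *\<^sub>R u))) (at s within {0..t})"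
    if "0 \<le> s" "s \<le> t" for s
  proof -
    have d1: "((\<lambda>s. th + s *\<^sub>R u + t *\<^sub>R v) has_derivative (\<lambda>h. h *\<^sub>R u)) (at s within {0..t})"
      by (auto intro!: derivative_eq_intros)
    have d2: "((\<lambda>s. th + s *\<^sub>R u) has_derivative (\<lambda>h. h *\<^sub>R u)) (at s within {0..t})"
      by (auto intro!: derivative_eq_intros)
    have a1: "(L has_derivative (\<lambda>d. G (th + s *\<^sub>R u + t *\<^sub>R v) \<bullet> d)) (at (th + s *\<^sub>R u + t *\<^sub>R v))"
      using dL[of "th + s *\<^sub>R u + t *\<^sub>R v"] nrm[OF that] tB by (simp add: add.assoc)
    have a2: "(L has_derivative (\<lambda>d. G (th + s *\<^sub>R u) \<bullet> d)) (at (th + s *\<^sub>R u))"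
      using dL[of "th + s *\<^sub>R u"] nrm[OF that] tB by simp
    show ?thesis unfolding \<phi>_def
      using has_derivative_diff[OF has_derivative_compose[OF d1 a1] has_derivative_compose[OF d2 a2]] .
  qed
  obtain \<xi> where xi: "\<xi> \<in> {0..t}" and mv: "\<phi> t - \<phi> 0 = G (th + \<xi> *\<^sub>R u + t *\<^sub>R v) \<bullet> (t *\<^sub>R u) - G (th + \<xi> *\<^sub>R u) \<bullet> (t *\<^sub>R u)"
    using mvt_very_simple[of 0 t \<phi>, OF _ der] t by force
  define a where "a = \<xi> *\<^sub>R u + t *\<^sub>R v"
  define b where "b = \<xi> *\<^sub>R u"
  have na: "norm a \<le> t * B" and nb: "norm b \<le> t * B" using nrm xi unfolding a_def b_def by auto
  have ea: "norm (G (th + a) - G th - J *v a) \<le> e * (t * B)"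
  proof -
    have "norm (G (th + a) - G th - J *v a) \<le> e * norm a"
      using dG[of "th + a"] na tB by simp
    also have "\<dots> \<le> e * (t * B)" using na e by (rule mult_left_mono)
    finally show ?thesis .
  qed
  have eb: "norm (G (th + b) - G th - J *v b) \<le> e * (t * B)"
  proof -
    have "norm (G (th + b) - G th - J *v b) \<le> e * norm b"
      using dG[of "th + b"] nb tB by simp
    also have "\<dots> \<le> e * (t * B)" using nb e by (rule mult_left_mono)
    finally show ?thesis .
  qed
  have "a - b = t *\<^sub>R v" unfolding a_def b_def by simp
  hence Jab: "J *v a - J *v b = t *\<^sub>R (J *v v)"
    by (metis matrix_vector_mult_diff_distrib matrix_vector_mult_scaleR)
  define w where "w = (G (th + a) - G th - J *v a) - (G (th + b) - G th - J *v b)"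
  have "norm w \<le> norm (G (th + a) - G th - J *v a) + norm (G (th + b) - G th - J *v b)"
    unfolding w_def by (rule norm_triangle_ineq4)
  hence nw: "norm w \<le> 2 * e * (t * B)" using ea eb by linarith
  have diff: "G (th + a) - G (th + b) = w + t *\<^sub>R (J *v v)" unfolding w_def using Jab
    by (simp add: algebra_simps)
  have "\<phi> t - \<phi> 0 = t * ((G (th + a) - G (th + b)) \<bullet> u)"
    using mv unfolding a_def b_def by (simp add: inner_diff_left add.assoc right_diff_distrib)
  also have "\<dots> = t * (w \<bullet> u) + t^2 * ((J *v v) \<bullet> u)" unfolding diff
    by (simp add: inner_add_left power2_eq_square algebra_simps)
  finally have eq: "\<phi> t - \<phi> 0 = t * (w \<bullet> u) + t^2 * ((J *v v) \<bullet> u)" .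
  have "\<bar>w \<bullet> u\<bar> \<le> norm w * norm u" by (rule Cauchy_Schwarz_ineq2)
  also have "\<dots> \<le> (2 * e * (t * B)) * B"
  proof (rule mult_mono)
    show "0 \<le> 2 * e * (t * B)" using e t B1 by simp
    show "norm u \<le> B" unfolding B_def by simp
  qed (use nw in auto)
  finally have wu0: "\<bar>w \<bullet> u\<bar> \<le> 2 * e * (t * B) * B" .
  have "\<bar>t * (w \<bullet> u)\<bar> = t * \<bar>w \<bullet> u\<bar>" using \<open>t > 0\<close> by (simp add: abs_mult)
  also have "\<dots> \<le> t * (2 * e * (t * B) * B)" by (rule mult_left_mono[OF wu0]) (use \<open>t > 0\<close> in simp)
  also have "\<dots> = 2 * e * t^2 * B^2" by (simp add: power2_eq_square)
  finally have wu: "\<bar>t * (w \<bullet> u)\<bar> \<le> 2 * e * t^2 * B^2" .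
  have "\<phi> t - \<phi> 0 = L (th + t *\<^sub>R u + t *\<^sub>R v) - L (th + t *\<^sub>R u) - L (th + t *\<^sub>R v) + L th"
    unfolding \<phi>_def by simp
  hence "(L (th + t *\<^sub>R u + t *\<^sub>R v) - L (th + t *\<^sub>R u) - L (th + t *\<^sub>R v) + L th)
           - t^2 * ((J *v v) \<bullet> u) = t * (w \<bullet> u)" using eq by linarith
  hence "\<bar>(L (th + t *\<^sub>R u + t *\<^sub>R v) - L (th + t *\<^sub>R u) - L (th + t *\<^sub>R v) + L th)
           - t^2 * ((J *v v) \<bullet> u)\<bar> \<le> 2 * e * t^2 * B^2" using wu by simp
  thus ?thesis unfolding B_def .
qed

lemma hess_sym:
  fixes L :: "real^'q \<Rightarrow> real"
  assumes "is_hessian_at L J th"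
  shows "(J *v u) \<bullet> v = (J *v v) \<bullet> u"
proof -
  obtain G where ev: "\<forall>\<^sub>F \<theta> in nhds th. (L has_derivative (\<lambda>d. G \<theta> \<bullet> d)) (at \<theta>)"
    and dG: "(G has_derivative (\<lambda>d. J *v d)) (at th)"
    using assms unfolding is_hessian_at_def by blast
  obtain d0 where d0: "d0 > 0" "\<And>y. dist y th < d0 \<Longrightarrow> (L has_derivative (\<lambda>d. G y \<bullet> d)) (at y)"
    using ev unfolding eventually_nhds_metric by blast
  define B where "B = norm u + norm v + 1"
  have B1: "B \<ge> 1" unfolding B_def by (simp add: add_nonneg_nonneg)
  define D where "D = \<bar>(J *v u) \<bullet> v - (J *v v) \<bullet> u\<bar>"
  have "D \<le> 4 * e * B^2" if e: "e > 0" for e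
  proof -
    obtain d1 where d1: "d1 > 0" "\<And>y. norm (y - th) < d1 \<Longrightarrow> norm (G y - G th - J *v (y - th)) \<le> e * norm (y - th)"
      using dG e unfolding has_derivative_at_alt by blast
    define \<delta> where "\<delta> = min d0 d1"
    define t where "t = \<delta> / (2 * B)"
    have t0: "t > 0" unfolding t_def \<delta>_def using d0 d1 B1 by simp
    have dpos: "\<delta> > 0" unfolding \<delta>_def using d0 d1 by simp
    have "t * B = \<delta> / 2" unfolding t_def using B1 by (simp add: field_simps)
    hence tB: "t * B < \<delta>" using dpos by simp
    have dL': "\<And>y. norm (y - th) < \<delta> \<Longrightarrow> (L has_derivative (\<lambda>d. G y \<bullet> d)) (at y)"
      using d0 unfolding \<delta>_def by (simp add: dist_norm)
    have dG': "\<And>y. norm (y - th) < \<delta> \<Longrightarrow> norm (G y - G th - J *v (y - th)) \<le> e * norm (y - th)"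
      using d1 unfolding \<delta>_def by simp
    have tB1: "t * (norm u + norm v + 1) < \<delta>" "t * (norm v + norm u + 1) < \<delta>"
      using tB unfolding B_def by (simp_all add: add.commute add.left_commute)
    note E1 = hess_est[OF dL' dG' _ t0 tB1(1)]
    note E2 = hess_est[OF dL' dG' _ t0 tB1(2)]
    have "norm v + norm u + 1 = B" unfolding B_def by simp
    hence E1': "\<bar>(L (th + t *\<^sub>R u + t *\<^sub>R v) - L (th + t *\<^sub>R u) - L (th + t *\<^sub>R v) + L th) - t^2 * ((J *v v) \<bullet> u)\<bar> \<le> 2 * e * t^2 * B^2"
      and E2': "\<bar>(L (th + t *\<^sub>R u + t *\<^sub>R v) - L (th + t *\<^sub>R u) - L (th + t *\<^sub>R v) + L th) - t^2 * ((J *v u) \<bullet> v)\<bar> \<le> 2 * e * t^2 * B^2"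
      using E1 E2 e t0 tB unfolding B_def by (auto simp: add.commute add.left_commute)
    have "\<bar>t^2 * ((J *v u) \<bullet> v) - t^2 * ((J *v v) \<bullet> u)\<bar> \<le> 4 * e * t^2 * B^2"
      using E1' E2' by linarith
    hence "t^2 * D \<le> 4 * e * t^2 * B^2" unfolding D_def
      by (simp add: abs_mult right_diff_distrib[symmetric])
    thus ?thesis using t0 by (simp add: mult.assoc mult.left_commute)
  qed
  note De = this
  have "D \<le> 0"
  proof (rule ccontr)
    assume "\<not> D \<le> 0"
    hence Dp: "D > 0" by simp
    have Bp: "B^2 > 0" using B1 by simp
    have "D \<le> 4 * (D / (8 * B^2)) * B^2" using De[of "D / (8 * B^2)"] Dp Bp by simp
    also have "\<dots> = D / 2" using Bp by (simp add: field_simps)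
    finally show False using Dp by simp
  qed
  thus ?thesis unfolding D_def by simp
qed


lemma trace_outer:
  fixes A :: "real^'q^'q" and g :: "real^'q"
  shows "trace (A ** outer g g ** A) = g \<bullet> ((A ** A) *v g)"
proof -
  have "trace (A ** outer g g ** A) = (\<Sum>a\<in>UNIV. \<Sum>c\<in>UNIV. \<Sum>b\<in>UNIV. A$a$b * g$b * g$c * A$c$a)"
    by (simp add: trace_def matrix_matrix_mult_def outer_def sum_distrib_right mult.assoc)
  also have "\<dots> = (\<Sum>c\<in>UNIV. \<Sum>b\<in>UNIV. \<Sum>a\<in>UNIV. A$a$b * g$b * g$c * A$c$a)"
    by (rule trans[OF sum.swap], rule sum.cong[OF refl], rule sum.swap)
  also have "\<dots> = g \<bullet> ((A ** A) *v g)"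
    by (simp add: inner_vec_def matrix_matrix_mult_def matrix_vector_mult_def sum_distrib_left sum_distrib_right mult_ac)
  finally show ?thesis .
qed

lemma trace_lin:
  fixes A :: "real^'q^'q"
  assumes "finite I"
  shows "trace (A ** (c *\<^sub>R (\<Sum>i\<in>I. d i *\<^sub>R outer (g i) (g i))) ** A)
     = c * (\<Sum>i\<in>I. d i * (g i \<bullet> ((A ** A) *v g i)))"
proof -
  have lin: "trace (A ** (X + Y) ** A) = trace (A ** X ** A) + trace (A ** Y ** A)"
    and sc: "trace (A ** (s *\<^sub>R X) ** A) = s * trace (A ** X ** A)" for X Y :: "real^'q^'q" and s
    by (simp_all add: trace_def matrix_matrix_mult_def
        sum_distrib_left sum_distrib_right algebra_simps sum.distrib)
  have z: "trace (A ** (0::real^'q^'q) ** A) = 0"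
    by (simp add: trace_def matrix_matrix_mult_def)
  have "trace (A ** (\<Sum>i\<in>I. d i *\<^sub>R outer (g i) (g i)) ** A) = (\<Sum>i\<in>I. d i * (g i \<bullet> ((A ** A) *v g i)))"
    using assms
  proof (induction I rule: finite_induct)
    case empty then show ?case using z by simp
  next
    case (insert i I) then show ?case by (simp add: lin sc trace_outer)
  qed
  thus ?thesis by (simp add: sc)
qed

lemma sym_inv:
  fixes J :: "real^'q^'q"
  assumes "invertible J" "transpose J = J"
  shows "transpose (matrix_inv J) = matrix_inv J"
    and "J ** matrix_inv J = mat 1" "matrix_inv J ** J = mat 1"
proof -
  define A where "A = matrix_inv J"
  have i: "J ** A = mat 1 \<and> A ** J = mat 1"
    using assms(1) unfolding invertible_def A_def matrix_inv_def by (rule someI_ex)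
  have "transpose A ** J = transpose A ** transpose J" using assms(2) by simp
  also have "\<dots> = transpose (J ** A)" by (simp add: matrix_transpose_mul)
  also have "\<dots> = mat 1" using i by simp
  finally have tA: "transpose A ** J = mat 1" .
  have "transpose A = transpose A ** (J ** A)" using i by simp
  also have "\<dots> = (transpose A ** J) ** A" by (simp add: matrix_mul_assoc)
  also have "\<dots> = A" using tA by simp
  finally have "transpose A = A" .
  thus "transpose (matrix_inv J) = matrix_inv J" unfolding A_def .
  show "J ** matrix_inv J = mat 1" "matrix_inv J ** J = mat 1" using i unfolding A_def by auto
qed

lemma quad_nonneg:
  fixes A :: "real^'q^'q"
  assumes "transpose A = A"
  shows "g \<bullet> ((A ** A) *v g) = (A *v g) \<bullet> (A *v g)" "g \<bullet> ((A ** A) *v g) \<ge> 0"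
proof -
  have "g \<bullet> ((A ** A) *v g) = g \<bullet> (A *v (A *v g))" by (simp add: matrix_vector_mul_assoc)
  also have "\<dots> = (g v* A) \<bullet> (A *v g)" by (simp add: dot_lmul_matrix)
  also have "g v* A = A *v g" using assms vector_transpose_matrix[of g A] by simp
  finally show "g \<bullet> ((A ** A) *v g) = (A *v g) \<bullet> (A *v g)" .
  thus "g \<bullet> ((A ** A) *v g) \<ge> 0" by simp
qed

lemma axis_entry:
  fixes J :: "real^'q^'q"
  shows "(J *v axis j 1) \<bullet> axis i 1 = J $ i $ j"
  by (simp add: inner_axis matrix_vector_mult_basis column_def)


lemma sum_shift1: "(\<Sum>i=1..(n::nat). f (i - 1)) = (\<Sum>j<n. (f j::real))"
  by (induction n) (auto simp: atLeastAtMostSuc_conv)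

theorem lemma2:
  fixes n r :: nat
    and ys :: "'x \<Rightarrow> real^'q \<Rightarrow> real"
    and x :: "nat \<Rightarrow> 'x" and yp :: "nat \<Rightarrow> real"
    and \<Theta> :: "(real^'q) set" and th :: "real^'q"
    and g :: "nat \<Rightarrow> real^'q" and J :: "real^'q^'q"
    and hmV hmVc hopt :: "nat \<Rightarrow> real"
    and \<sigma> :: "nat \<Rightarrow> nat" and \<pi> :: "nat \<Rightarrow> real"
  assumes th_in: "th \<in> \<Theta>"
    and th_min: "\<forall>\<theta>\<in>\<Theta>. loss n ys x yp th \<le> loss n ys x yp \<theta>"
    and grad: "\<forall>i<n. (ys (x i) has_derivative (\<lambda>d. g i \<bullet> d)) (at th)"
    and hess: "is_hessian_at (loss n ys x yp) J th"
    and J_inv: "invertible J"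
    and hmV_def: "\<forall>i<n. hmV i = \<bar>yp i - ys (x i) th\<bar>
                     * sqrt (g i \<bullet> ((matrix_inv J ** matrix_inv J) *v g i))"
    and hmVc_def: "\<forall>i<n. hmVc i = \<bar>yp i - ys (x i) th\<bar> * sqrt (g i \<bullet> g i)"
    and opt: "hopt = hmV \<or> hopt = hmVc"
    and r_range: "1 \<le> r" "r \<le> n - 1"
    and \<sigma>_bij: "bij_betw \<sigma> {..<n} {..<n}"
    and \<sigma>_sorted: "\<forall>i j. i \<le> j \<longrightarrow> j < n \<longrightarrow> hopt (\<sigma> i) \<le> hopt (\<sigma> j)"
    and pos: "hopt (\<sigma> (n - r - 1)) > 0"
    and \<pi>_def: "\<forall>i<n. \<pi> i = real r * min (hopt i) (Mthr (\<lambda>i. hopt (\<sigma> (i - 1))) n r)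
                     / (\<Sum>j<n. min (hopt j) (Mthr (\<lambda>i. hopt (\<sigma> (i - 1))) n r))"
  shows "let hs = (\<lambda>i. hopt (\<sigma> (i - 1)));
             hv = (\<lambda>i. hmV (\<sigma> (i - 1)));
             k = kidx hs n r;
             V = (4 / real n ^ 2) *\<^sub>R (\<Sum>i<n. ((1 - \<pi> i) / \<pi> i * (yp i - ys (x i) th)^2)
                    *\<^sub>R outer (g i) (g i));
             \<Sigma> = matrix_inv J ** V ** matrix_inv J
         in trace \<Sigma> = 4 / (real n ^ 2 * real (r - k)) * (\<Sum>i=1..n-k. hs i)
                         * (\<Sum>i=1..n-k. (hv i)^2 / hs i)
                       - 4 / real n ^ 2 * (\<Sum>i=1..n-k. (hv i)^2)
          \<and> (hopt = hmV \<longrightarrow>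
               trace \<Sigma> = 4 / (real n ^ 2 * real (r - k)) * (\<Sum>i=1..n-k. hv i)^2
                         - 4 / real n ^ 2 * (\<Sum>i=1..n-k. (hv i)^2))"
proof -
  define A where "A = matrix_inv J"
  have Jsym: "transpose J = J"
  proof -
    have "J $ i $ j = J $ j $ i" for i j
      using hess_sym[OF hess, of "axis j 1" "axis i 1"] by (simp add: axis_entry)
    thus ?thesis by (simp add: vec_eq_iff transpose_def)
  qed
  have Asym: "transpose A = A" unfolding A_def using sym_inv[OF J_inv Jsym] by simp
  define e where "e i = yp i - ys (x i) th" for i
  define q where "q i = g i \<bullet> ((A ** A) *v g i)" for i
  have q0: "q i \<ge> 0" for i unfolding q_def using quad_nonneg[OF Asym] by simp
  have hmV': "hmV i = \<bar>e i\<bar> * sqrt (q i)" if "i < n" for i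
    using hmV_def that unfolding e_def q_def A_def by simp
  have hmVsq: "(hmV i)^2 = (e i)^2 * q i" if "i < n" for i
    using hmV'[OF that] q0[of i] by (simp add: power_mult_distrib)
  have hmV0: "hmV i \<ge> 0" if "i < n" for i using hmV'[OF that] q0[of i] by simp
  have hmVc0: "hmVc i \<ge> 0" if "i < n" for i using hmVc_def that by simp
  have hopt0: "hopt i \<ge> 0" if "i < n" for i using opt hmV0[OF that] hmVc0[OF that] by auto
  have hopt_z: "hmV i = 0" if "i < n" "hopt i = 0" for i
  proof (cases "hopt = hmV")
    case True thus ?thesis using that by simp
  next
    case False
    hence "hmVc i = 0" using opt that by simp
    hence "e i = 0 \<or> g i \<bullet> g i = 0" using hmVc_def that unfolding e_def by simp
    hence "e i = 0 \<or> g i = 0" by simp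
    thus ?thesis using hmV'[OF that(1)] unfolding q_def by auto
  qed
  define hs where "hs = (\<lambda>i. hopt (\<sigma> (i - 1)))"
  define hv where "hv = (\<lambda>i. hmV (\<sigma> (i - 1)))"
  define k where "k = kidx hs n r"
  define M where "M = Mthr hs n r"
  define V where "V = (4 / real n ^ 2) *\<^sub>R (\<Sum>i<n. ((1 - \<pi> i) / \<pi> i * (yp i - ys (x i) th)^2)
                    *\<^sub>R outer (g i) (g i))"
  have sig: "\<sigma> j < n" if "j < n" for j using \<sigma>_bij that by (auto simp: bij_betw_def)
  have nge: "n \<ge> 2" using r_range by linarith
  have hs0: "hs i \<ge> 0" if "1 \<le> i" "i \<le> n" for i
    unfolding hs_def using hopt0 sig that by simp
  have hsz: "hv i = 0" if "1 \<le> i" "i \<le> n" "hs i = 0" for i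
    unfolding hv_def using hopt_z sig that unfolding hs_def by simp
  have hsmono: "hs i \<le> hs j" if "1 \<le> i" "i \<le> j" "j \<le> n" for i j
    unfolding hs_def using \<sigma>_sorted that by simp
  have hspos: "hs (n - r) > 0" unfolding hs_def using pos by (simp add: diff_diff_add)
  have TR1: "trace (A ** V ** A) = 4 / real n ^ 2 * (\<Sum>i<n. (1 - \<pi> i) / \<pi> i * (hmV i)^2)"
  proof -
    have "trace (A ** V ** A) = 4 / real n ^ 2 * (\<Sum>i<n. ((1 - \<pi> i) / \<pi> i * (yp i - ys (x i) th)^2) * q i)"
      unfolding V_def q_def by (rule trace_lin) simp
    also have "(\<Sum>i<n. ((1 - \<pi> i) / \<pi> i * (yp i - ys (x i) th)^2) * q i) = (\<Sum>i<n. (1 - \<pi> i) / \<pi> i * (hmV i)^2)"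
      by (rule sum.cong[OF refl]) (simp add: hmVsq e_def)
    finally show ?thesis .
  qed
  define T where "T i = (1 - \<pi> i) / \<pi> i * (hmV i)^2" for i
  have "(\<Sum>i<n. T i) = (\<Sum>j<n. T (\<sigma> j))"
    using sum.reindex_bij_betw[OF \<sigma>_bij, of T] by simp
  also have "\<dots> = (\<Sum>i=1..n. T (\<sigma> (i - 1)))" using sum_shift1[of "\<lambda>j. T (\<sigma> j)" n] by simp
  finally have TR2: "(\<Sum>i<n. T i) = (\<Sum>i=1..n. T (\<sigma> (i - 1)))" .
  define P where "P s \<longleftrightarrow> s \<le> r \<and> real (r - s) * hs (n - s) < (\<Sum>i=1..n-s. hs i)" for s
  have k_eq: "k = (LEAST s. P s)" unfolding k_def kidx_def P_def ..
  have sum_ge: "(\<Sum>i=1..m. hs i) \<ge> hs m" if "1 \<le> m" "m \<le> n" for m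
    by (rule member_le_sum) (use that hs0 in auto)
  have Pr: "P r"
  proof -
    have "hs (n - r) \<le> (\<Sum>i=1..n-r. hs i)" using r_range by (intro sum_ge) auto
    thus ?thesis unfolding P_def using hspos by simp
  qed
  have Pk: "P k" unfolding k_eq by (rule LeastI[of P, OF Pr])
  have notP: "\<not> P s" if "s < k" for s using not_less_Least[of s P] that unfolding k_eq by blast
  have kr: "k \<le> r" using Pk unfolding P_def by simp
  have klr: "k < r"
  proof (rule ccontr)
    assume "\<not> k < r" hence "k = r" using kr by simp
    hence np: "\<not> P (r - 1)" using notP r_range by simp
    have e1: "n - (r - 1) = Suc (n - r)" using r_range by simp
    have "(\<Sum>i=1..n-(r-1). hs i) = (\<Sum>i=1..n-r. hs i) + hs (Suc (n - r))" unfolding e1 by simp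
    moreover have "(\<Sum>i=1..n-r. hs i) \<ge> hs (n - r)" using r_range by (intro sum_ge) auto
    ultimately have "hs (n - (r - 1)) < (\<Sum>i=1..n-(r-1). hs i)" using hspos e1 by simp
    hence "P (r - 1)" unfolding P_def using r_range by simp
    thus False using np by simp
  qed
  define Ss where "Ss = (\<Sum>i=1..n-k. hs i)"
  have M_eq: "M = Ss / real (r - k)" unfolding M_def Mthr_def Ss_def k_def ..
  have rk: "real (r - k) > 0" using klr by simp
  have hk_lt: "hs (n - k) < M" using Pk rk unfolding P_def M_eq Ss_def by (simp add: field_simps)
  have "hs (n - r) \<le> hs (n - k)" using klr r_range by (intro hsmono) auto
  hence Mpos: "M > 0" using hspos hk_lt by simp
  have low: "hs i < M" if "1 \<le> i" "i \<le> n - k" for i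
    using hsmono[of i "n - k"] that hk_lt by force
  have high: "hs i \<ge> M" if "n - k < i" "i \<le> n" for i
  proof -
    have k1: "k \<ge> 1" using that by simp
    have np: "\<not> P (k - 1)" using notP k1 by simp
    have e1: "n - (k - 1) = Suc (n - k)" using k1 klr r_range by simp
    have rr: "real (r - (k - 1)) = real (r - k) + 1" using k1 klr by simp
    have "(\<Sum>i=1..n-(k-1). hs i) = Ss + hs (Suc (n - k))" unfolding e1 Ss_def by simp
    hence "(real (r - k) + 1) * hs (Suc (n - k)) \<ge> Ss + hs (Suc (n - k))"
      using np klr kr unfolding P_def e1 rr by (simp add: not_less)
    hence "real (r - k) * hs (Suc (n - k)) \<ge> Ss" by (simp add: algebra_simps)
    hence "hs (Suc (n - k)) \<ge> M" unfolding M_eq using rk by (simp add: field_simps)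
    moreover have "hs (Suc (n - k)) \<le> hs i" using that by (intro hsmono) auto
    ultimately show ?thesis by simp
  qed
  have nk: "n - k + k = n" using klr r_range by simp
  have split: "(\<Sum>i=1..n. f i) = (\<Sum>i=1..n-k. f i) + (\<Sum>i=Suc (n-k)..n. f i)" for f :: "nat \<Rightarrow> real"
  proof -
    have "(\<Sum>i=1..n-k+k. f i) = (\<Sum>i=1..n-k. f i) + (\<Sum>i=n-k+1..n-k+k. f i)"
      by (rule sum.ub_add_nat) simp
    thus ?thesis using nk by simp
  qed
  have den: "(\<Sum>j<n. min (hopt j) M) = real r * M"
  proof -
    have "(\<Sum>j<n. min (hopt j) M) = (\<Sum>j<n. min (hopt (\<sigma> j)) M)"
      using sum.reindex_bij_betw[OF \<sigma>_bij, of "\<lambda>j. min (hopt j) M"] by simp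
    also have "\<dots> = (\<Sum>i=1..n. min (hs i) M)"
      using sum_shift1[of "\<lambda>j. min (hopt (\<sigma> j)) M" n] unfolding hs_def by simp
    also have "\<dots> = (\<Sum>i=1..n-k. min (hs i) M) + (\<Sum>i=Suc (n-k)..n. min (hs i) M)" by (rule split)
    also have "(\<Sum>i=1..n-k. min (hs i) M) = Ss" unfolding Ss_def
      by (rule sum.cong[OF refl]) (use low in fastforce)
    also have "(\<Sum>i=Suc (n-k)..n. min (hs i) M) = (\<Sum>i=Suc (n-k)..n. M)"
      by (rule sum.cong[OF refl]) (use high in fastforce)
    also have "\<dots> = real k * M" using nk by simp
    also have "Ss = real (r - k) * M" unfolding M_eq using rk by simp
    finally show ?thesis using kr by (simp add: algebra_simps of_nat_diff)
  qed
  have pi_s: "\<pi> (\<sigma> (i - 1)) = min (hs i) M / M" if "1 \<le> i" "i \<le> n" for i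
  proof -
    have "\<sigma> (i - 1) < n" using sig that by simp
    hence "\<pi> (\<sigma> (i - 1)) = real r * min (hs i) M / (real r * M)"
      using \<pi>_def den unfolding M_def hs_def by simp
    thus ?thesis using r_range by simp
  qed
  have Thigh: "T (\<sigma> (i - 1)) = 0" if "Suc (n - k) \<le> i" "i \<le> n" for i
    unfolding T_def using pi_s[of i] high[of i] that Mpos by simp
  have Tlow: "T (\<sigma> (i - 1)) = M * (hv i)^2 / hs i - (hv i)^2" if "1 \<le> i" "i \<le> n - k" for i
  proof -
    have iN: "i \<le> n" using that by simp
    have p: "\<pi> (\<sigma> (i - 1)) = hs i / M" using pi_s[OF that(1) iN] low[OF that] by simp
    show ?thesis
    proof (cases "hs i = 0")
      case True thus ?thesis using hsz[OF that(1) iN] unfolding T_def hv_def by simp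
    next
      case False
      hence hp: "hs i > 0" using hs0[OF that(1) iN] by simp
      have hvi: "hmV (\<sigma> (i - 1)) = hv i" by (simp add: hv_def)
      show ?thesis unfolding T_def p hvi using hp Mpos
        by (simp add: field_simps)
    qed
  qed
  have "(\<Sum>i=1..n. T (\<sigma> (i - 1))) = (\<Sum>i=1..n-k. M * (hv i)^2 / hs i - (hv i)^2)"
    using split[of "\<lambda>i. T (\<sigma> (i - 1))"] Thigh Tlow by simp
  also have "\<dots> = M * (\<Sum>i=1..n-k. (hv i)^2 / hs i) - (\<Sum>i=1..n-k. (hv i)^2)"
    by (simp add: sum_subtractf sum_distrib_left)
  finally have TR3: "(\<Sum>i=1..n. T (\<sigma> (i - 1))) = M * (\<Sum>i=1..n-k. (hv i)^2 / hs i) - (\<Sum>i=1..n-k. (hv i)^2)" .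
  have MAIN: "trace (A ** V ** A) = 4 / (real n ^ 2 * real (r - k)) * (\<Sum>i=1..n-k. hs i)
                         * (\<Sum>i=1..n-k. (hv i)^2 / hs i)
                       - 4 / real n ^ 2 * (\<Sum>i=1..n-k. (hv i)^2)"
  proof -
    have "trace (A ** V ** A) = 4 / real n ^ 2 * (\<Sum>i<n. T i)" using TR1 unfolding T_def .
    also have "\<dots> = 4 / real n ^ 2 * (Ss / real (r - k) * (\<Sum>i=1..n-k. (hv i)^2 / hs i) - (\<Sum>i=1..n-k. (hv i)^2))"
      using TR2 TR3 unfolding M_eq by simp
    also have "\<dots> = 4 / (real n ^ 2 * real (r - k)) * Ss * (\<Sum>i=1..n-k. (hv i)^2 / hs i)
                       - 4 / real n ^ 2 * (\<Sum>i=1..n-k. (hv i)^2)"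
      using rk nge by (simp add: field_simps)
    finally show ?thesis unfolding Ss_def .
  qed
  have SEC: "trace (A ** V ** A) = 4 / (real n ^ 2 * real (r - k)) * (\<Sum>i=1..n-k. hv i)^2
                         - 4 / real n ^ 2 * (\<Sum>i=1..n-k. (hv i)^2)" if "hopt = hmV"
  proof -
    have hh: "hs = hv" unfolding hs_def hv_def using that by simp
    have "(\<Sum>i=1..n-k. (hv i)^2 / hs i) = (\<Sum>i=1..n-k. hv i)"
      by (rule sum.cong[OF refl]) (simp add: hh power2_eq_square)
    thus ?thesis using MAIN hh by (simp add: power2_eq_square)
  qed
  show ?thesis unfolding Let_def
    using MAIN SEC unfolding A_def V_def k_def hs_def hv_def by simp
qed

end
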